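(* Let $\mathbb{F}$ be a field, $d\geq 3$ and $V$ a vector space over $\mathbb{F}$ of dimension $d+1$. Let $E^*_0,\dots,E^*_d$ be a system of mutually orthogonal idempotents in $\mathrm{End}(V)$ and $A\in\mathrm{End}(V)$ with $E^*_iAE^*_j=0$ if $|i-j|>1$ and $E^*_iAE^*_j\neq0$ if $|i-j|=1$. Assume $A$ is multiplicity-free and bipartite with primitive idempotents $E_0,\dots,E_d$ and eigenvalues $\theta_0,\dots,\theta_d$. Let $\theta^*_0,\dots,\theta^*_d\in\mathbb{F}$ be mutually distinct and $A^*=\sum_i\theta^*_iE^*_i$. Assume $E_0$ is normalizing and that in $\Delta$ the vertex $E_0$ is adjacent to $E_1$ and to no other vertex. Then $\theta_0(\theta^*_{d-1}-\theta^*_1)=\theta_1(\theta^*_d-\theta^*_0)$, and both $\theta_0$ and $\theta_1$ are nonzero.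
   Context: A system of mutually orthogonal idempotents is a sequence $E^*_0,\dots,E^*_d$ of linear maps $V\to V$ with $E^*_iE^*_j=\delta_{ij}E^*_i$ and $\operatorname{rank}E^*_i=1$. $A$ is multiplicity-free if it has $d+1$ mutually distinct eigenvalues in $\mathbb{F}$; the primitive idempotent $E_i$ for $\theta_i$ is the projection onto the $\theta_i$-eigenspace along the sum of the other eigenspaces. $A$ is bipartite if $\operatorname{tr}(E^*_iA)=0$ for all $i$. $\Delta$ is the graph with vertices $E_0,\dots,E_d$, where $E_i\neq E_j$ are adjacent iff $E_iA^*E_j\neq0$. For a basis $v_0,\dots,v_d$, the matrix $Y$ representing $A$ satisfies $Av_j=\sum_iY_{ij}v_i$. An eigenvalue $\theta$ of $A$ is normalizing if there is a basis $v_0,\dots,v_d$ with $v_i\in E^*_iV$ such that every row of the matrix representing $A$ sums to $\theta$; $E_i$ is normalizing if $\theta_i$ is. *)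

theory Defs
  imports "Jordan_Normal_Form.DL_Rank" "Jordan_Normal_Form.Char_Poly"
begin

text \<open>V is modelled as F^n with n = d+1; End(V) as n x n matrices over the field.\<close>

definition mat_trace :: "'a::comm_ring_1 mat \<Rightarrow> 'a" where
  "mat_trace M = (\<Sum>i<dim_row M. M $$ (i, i))"

definition mo_idempotents :: "nat \<Rightarrow> (nat \<Rightarrow> 'a::field mat) \<Rightarrow> bool" where
  "mo_idempotents d Es \<longleftrightarrow>
     (\<forall>i\<le>d. Es i \<in> carrier_mat (d+1) (d+1) \<and> vec_space.rank (d+1) (Es i) = 1) \<and>
     (\<forall>i\<le>d. \<forall>j\<le>d. Es i * Es j = (if i = j then Es i else 0\<^sub>m (d+1) (d+1)))"

definition multiplicity_free :: "nat \<Rightarrow> 'a::field mat \<Rightarrow> (nat \<Rightarrow> 'a) \<Rightarrow> bool" where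
  "multiplicity_free d A th \<longleftrightarrow>
     (\<forall>i\<le>d. eigenvalue A (th i)) \<and> inj_on th {0..d}"

definition primitive_idempotent ::
    "nat \<Rightarrow> 'a::field mat \<Rightarrow> (nat \<Rightarrow> 'a) \<Rightarrow> nat \<Rightarrow> 'a mat \<Rightarrow> bool" where
  "primitive_idempotent d A th i E \<longleftrightarrow>
     E \<in> carrier_mat (d+1) (d+1) \<and>
     (\<forall>v \<in> carrier_vec (d+1). A *\<^sub>v v = th i \<cdot>\<^sub>v v \<longrightarrow> E *\<^sub>v v = v) \<and>
     (\<forall>j\<le>d. j \<noteq> i \<longrightarrow>
        (\<forall>v \<in> carrier_vec (d+1). A *\<^sub>v v = th j \<cdot>\<^sub>v v \<longrightarrow> E *\<^sub>v v = 0\<^sub>v (d+1)))"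

definition bipartite :: "nat \<Rightarrow> (nat \<Rightarrow> 'a::field mat) \<Rightarrow> 'a mat \<Rightarrow> bool" where
  "bipartite d Es A \<longleftrightarrow> (\<forall>i\<le>d. mat_trace (Es i * A) = 0)"

text \<open>A* = sum_i ths i * Es i, written entrywise.\<close>
definition dual_mat :: "nat \<Rightarrow> (nat \<Rightarrow> 'a::field) \<Rightarrow> (nat \<Rightarrow> 'a mat) \<Rightarrow> 'a mat" where
  "dual_mat d ths Es = mat (d+1) (d+1) (\<lambda>(r, c). \<Sum>i\<le>d. ths i * Es i $$ (r, c))"

definition Delta_adj :: "nat \<Rightarrow> (nat \<Rightarrow> 'a::field mat) \<Rightarrow> 'a mat \<Rightarrow> nat \<Rightarrow> nat \<Rightarrow> bool" where
  "Delta_adj d E As i j \<longleftrightarrow> E i \<noteq> E j \<and> E i * As * E j \<noteq> 0\<^sub>m (d+1) (d+1)"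

text \<open>theta is normalizing: there is a basis v 0, ..., v d (columns of the invertible
  matrix P) with v i in Es i V, such that the matrix Y representing A
  (A v_j = sum_i Y_ij v_i, i.e. A P = P Y) has all row sums equal to theta.\<close>
definition normalizing :: "nat \<Rightarrow> (nat \<Rightarrow> 'a::field mat) \<Rightarrow> 'a mat \<Rightarrow> 'a \<Rightarrow> bool" where
  "normalizing d Es A \<theta> \<longleftrightarrow>
     (\<exists>v Y. (\<forall>i\<le>d. v i \<in> carrier_vec (d+1) \<and> (\<exists>w \<in> carrier_vec (d+1). v i = Es i *\<^sub>v w)) \<and>
        invertible_mat (mat_of_cols (d+1) (map v [0..<d+1])) \<and>
        Y \<in> carrier_mat (d+1) (d+1) \<and>
        A * mat_of_cols (d+1) (map v [0..<d+1]) = mat_of_cols (d+1) (map v [0..<d+1]) * Y \<and>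
        (\<forall>i\<le>d. (\<Sum>j\<le>d. Y $$ (i, j)) = \<theta>))"

end

theory Submission imports Defs begin

definition dg :: "nat \<Rightarrow> (nat \<Rightarrow> 'a::comm_ring_1) \<Rightarrow> 'a mat" where
  "dg n f = mat n n (\<lambda>(i,j). if i = j then f i else 0)"

lemma dg_carrier[simp]: "dg n f \<in> carrier_mat n n" by (simp add: dg_def)
lemma dim_dg[simp]: "dim_row (dg n f) = n" "dim_col (dg n f) = n" by (simp_all add: dg_def)
lemma index_dg[simp]: "i < n \<Longrightarrow> j < n \<Longrightarrow> dg n f $$ (i,j) = (if i = j then f i else 0)"
  by (simp add: dg_def)

lemma sum_single:
  assumes "finite S" "a \<in> S" "\<And>i. i \<in> S \<Longrightarrow> i \<noteq> a \<Longrightarrow> g i = 0"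
  shows "sum g S = g a"
proof -
  have "sum g S = g a + sum g (S - {a})" using assms by (simp add: sum.remove)
  also have "sum g (S - {a}) = 0" using assms by (intro sum.neutral) auto
  finally show ?thesis by simp
qed

lemma mult_dg_right:
  assumes "P \<in> carrier_mat m n"
  shows "P * dg n f = mat m n (\<lambda>(i,j). P $$ (i,j) * f j)"
proof (rule eq_matI)
  fix i j assume ij: "i < dim_row (mat m n (\<lambda>(i,j). P $$ (i,j) * f j))"
     "j < dim_col (mat m n (\<lambda>(i,j). P $$ (i,j) * f j))"
  hence i: "i < m" and j: "j < n" by auto
  have "(P * dg n f) $$ (i,j) = (\<Sum>k\<in>{0..<n}. P $$ (i,k) * (dg n f $$ (k,j)))"
    using assms i j by (simp add: scalar_prod_def)
  also have "\<dots> = P $$ (i,j) * f j"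
    by (rule trans[OF sum_single[where a=j]]) (use j in \<open>auto simp: dg_def\<close>)
  finally show "(P * dg n f) $$ (i,j) = mat m n (\<lambda>(i,j). P $$ (i,j) * f j) $$ (i,j)"
    using i j by simp
qed (use assms in auto)

lemma mult_dg_left:
  assumes "Q \<in> carrier_mat n m"
  shows "dg n f * Q = mat n m (\<lambda>(i,j). f i * Q $$ (i,j))"
proof (rule eq_matI)
  fix i j assume ij: "i < dim_row (mat n m (\<lambda>(i,j). f i * Q $$ (i,j)))"
     "j < dim_col (mat n m (\<lambda>(i,j). f i * Q $$ (i,j)))"
  hence i: "i < n" and j: "j < m" by auto
  have "(dg n f * Q) $$ (i,j) = (\<Sum>k\<in>{0..<n}. dg n f $$ (i,k) * Q $$ (k,j))"
    using assms i j by (simp add: scalar_prod_def)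
  also have "\<dots> = f i * Q $$ (i,j)"
    by (rule trans[OF sum_single[where a=i]]) (use i in \<open>auto simp: dg_def\<close>)
  finally show "(dg n f * Q) $$ (i,j) = mat n m (\<lambda>(i,j). f i * Q $$ (i,j)) $$ (i,j)"
    using i j by simp
qed (use assms in auto)

lemma triple_dg_entry:
  assumes P: "P \<in> carrier_mat n n" and Q: "Q \<in> carrier_mat n n" and r: "r < n" and c: "c < n"
  shows "(P * dg n f * Q) $$ (r,c) = (\<Sum>k\<in>{0..<n}. P $$ (r,k) * f k * Q $$ (k,c))"
  using assms by (simp add: mult_dg_right scalar_prod_def)

lemma smult_mat_mult_vec:
  assumes "A \<in> carrier_mat n m" "v \<in> carrier_vec m"
  shows "(k \<cdot>\<^sub>m A) *\<^sub>v v = k \<cdot>\<^sub>v (A *\<^sub>v v)"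
  using assms by (intro eq_vecI) (auto simp: scalar_prod_def sum_distrib_left mult.assoc intro!: sum.cong)

lemma eq_by_basis:
  fixes W :: "'a::comm_ring_1 mat"
  assumes W: "W \<in> carrier_mat n n" and Wi: "Wi \<in> carrier_mat n n" and WWi: "W * Wi = 1\<^sub>m n"
    and M: "M \<in> carrier_mat m n" and N: "N \<in> carrier_mat m n"
    and cols: "\<And>j. j < n \<Longrightarrow> M *\<^sub>v col W j = N *\<^sub>v col W j"
  shows "M = N"
proof -
  have "M * W = N * W"
  proof (rule mat_col_eqI)
    fix i assume "i < dim_col (N * W)"
    hence i: "i < n" using N W by simp
    show "col (M * W) i = col (N * W) i"
      by (subst col_mult2[OF M W i], subst col_mult2[OF N W i], rule cols[OF i])
  qed (use M N W in simp_all)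
  hence "M * W * Wi = N * W * Wi" by simp
  hence "M * (W * Wi) = N * (W * Wi)" using M N W Wi by (simp add: assoc_mult_mat[of _ m n _ n _ n])
  thus ?thesis using WWi right_mult_one_mat[OF M] right_mult_one_mat[OF N] by simp
qed

lemma mat_trace_comm:
  assumes "M \<in> carrier_mat n m" "N \<in> carrier_mat m n"
  shows "mat_trace (M * N) = mat_trace (N * M)"
proof -
  have "mat_trace (M * N) = (\<Sum>i<n. \<Sum>k<m. M $$ (i,k) * N $$ (k,i))"
    using assms by (simp add: mat_trace_def scalar_prod_def atLeast0LessThan)
  also have "\<dots> = (\<Sum>k<m. \<Sum>i<n. N $$ (k,i) * M $$ (i,k))"
    by (subst sum.swap) (simp add: mult.commute)
  also have "\<dots> = mat_trace (N * M)"
    using assms by (simp add: mat_trace_def scalar_prod_def atLeast0LessThan)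
  finally show ?thesis .
qed

lemma eig_indep:
  fixes A :: "'a::field mat"
  assumes A: "A \<in> carrier_mat n n" and fin: "finite S"
    and ev: "\<And>j. j \<in> S \<Longrightarrow> w j \<in> carrier_vec n \<and> w j \<noteq> 0\<^sub>v n \<and> A *\<^sub>v w j = th j \<cdot>\<^sub>v w j"
    and inj: "inj_on th S"
  shows "\<forall>c. (\<forall>r<n. (\<Sum>j\<in>S. c j * w j $ r) = 0) \<longrightarrow> (\<forall>j\<in>S. c j = 0)"
  using fin ev inj
proof (induction S rule: finite_induct)
  case empty
  then show ?case by simp
next
  case (insert k S)
  show ?case
  proof (intro allI impI)
  fix c assume hyp: "\<forall>r<n. (\<Sum>j\<in>insert k S. c j * w j $ r) = 0"
  have evS: "\<And>j. j \<in> S \<Longrightarrow> w j \<in> carrier_vec n \<and> w j \<noteq> 0\<^sub>v n \<and> A *\<^sub>v w j = th j \<cdot>\<^sub>v w j"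
    using insert.prems by auto
  have injS: "inj_on th S" using insert.prems by auto
  have Aw: "\<And>j r. j \<in> insert k S \<Longrightarrow> r < n \<Longrightarrow> th j * w j $ r = (\<Sum>m\<in>{0..<n}. A $$ (r,m) * w j $ m)"
  proof -
    fix j r assume j: "j \<in> insert k S" and r: "r < n"
    have wc: "w j \<in> carrier_vec n" and Aw: "A *\<^sub>v w j = th j \<cdot>\<^sub>v w j" using insert.prems(1)[OF j] by auto
    have "th j * w j $ r = (th j \<cdot>\<^sub>v w j) $ r" using wc r by auto
    also have "\<dots> = (A *\<^sub>v w j) $ r" using Aw by simp
    also have "\<dots> = (\<Sum>m\<in>{0..<n}. A $$ (r,m) * w j $ m)"
      using A r wc by (simp add: scalar_prod_def)
    finally show "th j * w j $ r = (\<Sum>m\<in>{0..<n}. A $$ (r,m) * w j $ m)" .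
  qed
  have "\<forall>r<n. (\<Sum>j\<in>S. (c j * (th j - th k)) * w j $ r) = 0"
  proof (intro allI impI)
    fix r assume r: "r < n"
    have "(\<Sum>j\<in>S. (c j * (th j - th k)) * w j $ r) = (\<Sum>j\<in>insert k S. (c j * (th j - th k)) * w j $ r)"
      using insert.hyps by simp
    also have "\<dots> = (\<Sum>j\<in>insert k S. c j * (th j * w j $ r)) - th k * (\<Sum>j\<in>insert k S. c j * w j $ r)"
      by (simp add: sum_distrib_left sum_subtractf algebra_simps)
    also have "(\<Sum>j\<in>insert k S. c j * w j $ r) = 0" using hyp r by blast
    also have "(\<Sum>j\<in>insert k S. c j * (th j * w j $ r)) = (\<Sum>j\<in>insert k S. c j * (\<Sum>m\<in>{0..<n}. A $$ (r,m) * w j $ m))"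
      using Aw r by (intro sum.cong) auto
    also have "\<dots> = (\<Sum>m\<in>{0..<n}. A $$ (r,m) * (\<Sum>j\<in>insert k S. c j * w j $ m))"
      by (simp add: sum_distrib_left sum.swap[of _ "insert k S"] algebra_simps)
    also have "\<dots> = 0" using hyp by simp
    finally show "(\<Sum>j\<in>S. (c j * (th j - th k)) * w j $ r) = 0" by simp
  qed
  note step = this
  have IH: "\<forall>c. (\<forall>r<n. (\<Sum>j\<in>S. c j * w j $ r) = 0) \<longrightarrow> (\<forall>j\<in>S. c j = 0)"
    by (rule insert.IH) (use evS injS in auto)
  have "\<forall>j\<in>S. c j * (th j - th k) = 0"
    using IH[rule_format, of "\<lambda>j. c j * (th j - th k)"] step by simp
  moreover have "\<forall>j\<in>S. th j \<noteq> th k" using insert.prems(2) insert.hyps by (auto simp: inj_on_def)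
  ultimately have cS: "\<forall>j\<in>S. c j = 0" by auto
  have ck: "c k = 0"
  proof (rule ccontr)
    assume ck: "c k \<noteq> 0"
    have wk: "w k \<in> carrier_vec n" "w k \<noteq> 0\<^sub>v n" using insert.prems(1) by auto
    then obtain r where r: "r < n" "w k $ r \<noteq> 0"
      by (metis carrier_vecD eq_vecI index_zero_vec(1) index_zero_vec(2))
    have "(\<Sum>j\<in>insert k S. c j * w j $ r) = c k * w k $ r"
      using insert.hyps cS by simp
    moreover have "(\<Sum>j\<in>insert k S. c j * w j $ r) = 0" using hyp r by blast
    ultimately show False using ck r by simp
  qed
  show "\<forall>j\<in>insert k S. c j = 0" using cS ck by auto
  qed
qed


lemma zero_mult_vec[simp]: "w \<in> carrier_vec m \<Longrightarrow> 0\<^sub>m n m *\<^sub>v w = (0\<^sub>v n :: 'a::comm_ring_1 vec)"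
  by (intro eq_vecI) (auto simp: scalar_prod_def)
lemma zero_smult_vec'[simp]: "(0::'a::comm_ring_1) \<cdot>\<^sub>v v = 0\<^sub>v (dim_vec v)"
  by (intro eq_vecI) auto
lemma smult_zero_vec'[simp]: "(k::'a::comm_ring_1) \<cdot>\<^sub>v 0\<^sub>v n = 0\<^sub>v n"
  by (intro eq_vecI) auto

lemma mult_eq_dg:
  fixes B :: "'a::field mat"
  assumes B: "B \<in> carrier_mat n n" and P: "P \<in> carrier_mat n n"
    and cols: "\<And>j. j < n \<Longrightarrow> B *\<^sub>v col P j = f j \<cdot>\<^sub>v col P j"
  shows "B * P = P * dg n f"
proof (rule mat_col_eqI)
  fix j assume "j < dim_col (P * dg n f)"
  hence j: "j < n" using P by simp
  have "col (B * P) j = f j \<cdot>\<^sub>v col P j" by (subst col_mult2[OF B P j]) (rule cols[OF j])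
  also have "\<dots> = col (P * dg n f) j"
    using P j by (intro eq_vecI) (auto simp: mult_dg_right mult.commute)
  finally show "col (B * P) j = col (P * dg n f) j" .
qed (use B P in auto)

lemma zero_entry_mat:
  assumes "M \<in> carrier_mat n m" "M \<noteq> 0\<^sub>m n m"
  obtains r k where "r < n" "k < m" "M $$ (r,k) \<noteq> 0"
proof -
  have "\<exists>r k. r < n \<and> k < m \<and> M $$ (r,k) \<noteq> 0"
  proof (rule ccontr)
    assume "\<not> ?thesis"
    hence "M = 0\<^sub>m n m" using assms(1) by (intro eq_matI) auto
    thus False using assms(2) by simp
  qed
  thus ?thesis using that by blast
qed

lemma zero_by_sim:
  fixes Z :: "'a::field mat"
  assumes Z: "Z \<in> carrier_mat n n" and P: "P \<in> carrier_mat n n" and Q: "Q \<in> carrier_mat n n"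
    and M: "M \<in> carrier_mat n n"
    and PQ: "P * Q = 1\<^sub>m n" and QP: "Q * P = 1\<^sub>m n" and ZP: "Z * P = P * M"
  shows "Z = 0\<^sub>m n n \<longleftrightarrow> M = 0\<^sub>m n n"
proof
  assume "Z = 0\<^sub>m n n"
  hence "P * M = 0\<^sub>m n n" using ZP P by simp
  hence "Q * (P * M) = 0\<^sub>m n n" using Q by simp
  thus "M = 0\<^sub>m n n" using QP M by (simp add: assoc_mult_mat[OF Q P M, symmetric])
next
  assume "M = 0\<^sub>m n n"
  hence "Z * P = 0\<^sub>m n n" using ZP P by simp
  hence "Z * P * Q = 0\<^sub>m n n" using Q by simp
  thus "Z = 0\<^sub>m n n" using PQ Z by (simp add: assoc_mult_mat[OF Z P Q])
qed


theorem corollary7p5: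
  fixes d :: nat
    and Es E :: "nat \<Rightarrow> 'a::field mat"
    and A :: "'a mat"
    and th ths :: "nat \<Rightarrow> 'a"
  assumes d3: "d \<ge> 3"
    and Es: "mo_idempotents d Es"
    and A: "A \<in> carrier_mat (d+1) (d+1)"
    and tri0: "\<forall>i\<le>d. \<forall>j\<le>d. (i > j + 1 \<or> j > i + 1) \<longrightarrow> Es i * A * Es j = 0\<^sub>m (d+1) (d+1)"
    and tri1: "\<forall>i\<le>d. \<forall>j\<le>d. (i = j + 1 \<or> j = i + 1) \<longrightarrow> Es i * A * Es j \<noteq> 0\<^sub>m (d+1) (d+1)"
    and mf: "multiplicity_free d A th"
    and bip: "bipartite d Es A"
    and E: "\<forall>i\<le>d. primitive_idempotent d A th i (E i)"
    and ths: "inj_on ths {0..d}"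
    and norm: "normalizing d Es A (th 0)"
    and adj01: "Delta_adj d E (dual_mat d ths Es) 0 1"
    and adj0: "\<forall>j\<le>d. j \<noteq> 1 \<longrightarrow> \<not> Delta_adj d E (dual_mat d ths Es) 0 j"
  shows "th 0 * (ths (d-1) - ths 1) = th 1 * (ths d - ths 0) \<and> th 0 \<noteq> 0 \<and> th 1 \<noteq> 0"
proof -
  define n where "n = d + 1"
  have nd: "\<And>i. i < n \<longleftrightarrow> i \<le> d" unfolding n_def by auto
  have Ac: "A \<in> carrier_mat n n" using A n_def by simp
  have Esc: "\<And>i. i \<le> d \<Longrightarrow> Es i \<in> carrier_mat n n"
    and Esm: "\<And>i j. i \<le> d \<Longrightarrow> j \<le> d \<Longrightarrow> Es i * Es j = (if i = j then Es i else 0\<^sub>m n n)"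
    using Es unfolding mo_idempotents_def n_def by auto
  obtain v Y where v: "\<forall>i\<le>d. v i \<in> carrier_vec n \<and> (\<exists>w \<in> carrier_vec n. v i = Es i *\<^sub>v w)"
    and Pinv: "invertible_mat (mat_of_cols n (map v [0..<n]))"
    and Yc: "Y \<in> carrier_mat n n"
    and AP0: "A * mat_of_cols n (map v [0..<n]) = mat_of_cols n (map v [0..<n]) * Y"
    and rows: "\<forall>i\<le>d. (\<Sum>j\<le>d. Y $$ (i, j)) = th 0"
    using norm unfolding normalizing_def n_def by blast
  define P where "P = mat_of_cols n (map v [0..<n])"
  have Pc: "P \<in> carrier_mat n n" unfolding carrier_mat_def P_def by simp
  have AP: "A * P = P * Y" using AP0 P_def by simp
  have colP: "\<And>j. j < n \<Longrightarrow> col P j = v j" using v nd by (simp add: P_def)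
  obtain Q where Qc: "Q \<in> carrier_mat n n" and PQ: "P * Q = 1\<^sub>m n" and QP: "Q * P = 1\<^sub>m n"
  proof -
    obtain B where PB: "P * B = 1\<^sub>m n" and BP: "B * P = 1\<^sub>m (dim_row B)"
      using Pinv Pc unfolding P_def[symmetric] invertible_mat_def inverts_mat_def by auto
    have "dim_col (P * B) = n" using PB by simp
    hence c: "dim_col B = n" by simp
    have "dim_col (B * P) = dim_row B" using BP by simp
    hence r: "dim_row B = n" using Pc by simp
    show ?thesis using that[of B] PB BP r c by auto
  qed
  define D where "D = (\<lambda>i. dg n (\<lambda>k. if k = i then (1::'a) else 0))"
  have Dc: "\<And>i. D i \<in> carrier_mat n n" by (simp add: D_def)
  have EsP: "\<And>i. i \<le> d \<Longrightarrow> Es i * P = P * D i"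
  proof -
    fix i assume i: "i \<le> d"
    show "Es i * P = P * D i" unfolding D_def
    proof (rule mult_eq_dg[OF Esc[OF i] Pc])
      fix j assume j: "j < n"
      obtain w where w: "w \<in> carrier_vec n" "v j = Es j *\<^sub>v w" using v j nd by blast
      have jd: "j \<le> d" using j nd by simp
      have "Es i *\<^sub>v col P j = (Es i * Es j) *\<^sub>v w" using colP[OF j] w
        by (simp add: assoc_mult_mat_vec[OF Esc[OF i] Esc[OF jd] w(1)])
      also have "\<dots> = (if j = i then (1::'a) else 0) \<cdot>\<^sub>v col P j"
      proof (cases "j = i")
        case True
        thus ?thesis using Esm[OF i jd] colP[OF j] w by simp
      next
        case False
        hence "Es i * Es j = 0\<^sub>m n n" using Esm[OF i jd] by simp
        have vjc: "v j \<in> carrier_vec n" using v jd by auto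
        have "(Es i * Es j) *\<^sub>v w = 0\<^sub>v n" using \<open>Es i * Es j = 0\<^sub>m n n\<close> w(1) by simp
        thus ?thesis using False colP[OF j] vjc by simp
      qed
      finally show "Es i *\<^sub>v col P j = (if j = i then (1::'a) else 0) \<cdot>\<^sub>v col P j" .
    qed
  qed
  have Es_eq: "\<And>i. i \<le> d \<Longrightarrow> Es i = P * D i * Q"
  proof -
    fix i assume i: "i \<le> d"
    have "Es i = Es i * (P * Q)" using PQ Esc[OF i] by simp
    also have "\<dots> = P * D i * Q" using EsP[OF i] by (simp add: assoc_mult_mat[OF Esc[OF i] Pc Qc, symmetric])
    finally show "Es i = P * D i * Q" .
  qed
  have Es_entry: "\<And>i r c. i \<le> d \<Longrightarrow> r < n \<Longrightarrow> c < n \<Longrightarrow> Es i $$ (r,c) = P $$ (r,i) * Q $$ (i,c)"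
  proof -
    fix i r c assume i: "i \<le> d" and r: "r < n" and c: "c < n"
    have "Es i $$ (r,c) = (\<Sum>k\<in>{0..<n}. P $$ (r,k) * (if k = i then 1 else 0) * Q $$ (k,c))"
      unfolding Es_eq[OF i] D_def by (rule triple_dg_entry[OF Pc Qc r c])
    also have "\<dots> = P $$ (r,i) * Q $$ (i,c)"
      by (rule trans[OF sum_single[where a=i]]) (use i nd in auto)
    finally show "Es i $$ (r,c) = P $$ (r,i) * Q $$ (i,c)" .
  qed
  have DYD: "\<And>i j. i \<le> d \<Longrightarrow> j \<le> d \<Longrightarrow> (D i * Y * D j = 0\<^sub>m n n) \<longleftrightarrow> Y $$ (i,j) = 0"
  proof -
    fix i j assume i: "i \<le> d" and j: "j \<le> d"
    have eq: "D i * Y * D j = mat n n (\<lambda>(r,c). ((if r = i then 1 else 0) * Y $$ (r,c)) * (if c = j then 1 else 0))"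
      unfolding D_def by (simp add: mult_dg_left[OF Yc] mult_dg_right[of _ n n], intro eq_matI, auto)
    show "(D i * Y * D j = 0\<^sub>m n n) \<longleftrightarrow> Y $$ (i,j) = 0"
    proof
      assume "D i * Y * D j = 0\<^sub>m n n"
      hence "(D i * Y * D j) $$ (i,j) = 0" using i j nd by simp
      thus "Y $$ (i,j) = 0" unfolding eq using i j nd by simp
    next
      assume "Y $$ (i,j) = 0"
      thus "D i * Y * D j = 0\<^sub>m n n" unfolding eq by (intro eq_matI) auto
    qed
  qed
  have EAE: "\<And>i j. i \<le> d \<Longrightarrow> j \<le> d \<Longrightarrow> Es i * A * Es j * P = P * (D i * Y * D j)"
  proof -
    fix i j assume i: "i \<le> d" and j: "j \<le> d"
    have "Es i * A * Es j * P = Es i * A * (Es j * P)"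
      by (rule assoc_mult_mat[OF mult_carrier_mat[OF Esc[OF i] Ac] Esc[OF j] Pc])
    also have "\<dots> = Es i * A * P * D j" using EsP[OF j]
      by (simp add: assoc_mult_mat[OF mult_carrier_mat[OF Esc[OF i] Ac] Pc Dc])
    also have "\<dots> = Es i * (A * P) * D j"
      by (simp add: assoc_mult_mat[OF Esc[OF i] Ac Pc])
    also have "\<dots> = Es i * P * Y * D j" using AP
      by (simp add: assoc_mult_mat[OF Esc[OF i] Pc Yc])
    also have "\<dots> = P * D i * Y * D j" using EsP[OF i] by simp
    also have "\<dots> = P * (D i * Y * D j)"
      by (simp add: assoc_mult_mat[OF Pc Dc Yc] assoc_mult_mat[OF Pc mult_carrier_mat[OF Dc Yc] Dc])
    finally show "Es i * A * Es j * P = P * (D i * Y * D j)" .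
  qed
  have Yz: "\<And>i j. i \<le> d \<Longrightarrow> j \<le> d \<Longrightarrow> (Es i * A * Es j = 0\<^sub>m n n) \<longleftrightarrow> Y $$ (i,j) = 0"
  proof -
    fix i j assume i: "i \<le> d" and j: "j \<le> d"
    have "(Es i * A * Es j = 0\<^sub>m n n) \<longleftrightarrow> D i * Y * D j = 0\<^sub>m n n"
      by (rule zero_by_sim[OF _ Pc Qc _ PQ QP EAE[OF i j]])
        (use Esc[OF i] Esc[OF j] Ac Dc Yc in \<open>auto intro!: mult_carrier_mat\<close>)
    thus "(Es i * A * Es j = 0\<^sub>m n n) \<longleftrightarrow> Y $$ (i,j) = 0" using DYD[OF i j] by simp
  qed
  have Yoff: "\<And>i j. i \<le> d \<Longrightarrow> j \<le> d \<Longrightarrow> (i > j + 1 \<or> j > i + 1) \<Longrightarrow> Y $$ (i,j) = 0"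
    using tri0 Yz unfolding n_def by blast
  have Yadj: "\<And>i j. i \<le> d \<Longrightarrow> j \<le> d \<Longrightarrow> (i = j + 1 \<or> j = i + 1) \<Longrightarrow> Y $$ (i,j) \<noteq> 0"
    using tri1 Yz unfolding n_def by blast
  have Ydiag: "\<And>i. i \<le> d \<Longrightarrow> Y $$ (i,i) = 0"
  proof -
    fix i assume i: "i \<le> d"
    have EAP: "Es i * A * P = P * (D i * Y)"
    proof -
      have "Es i * A * P = Es i * (A * P)" by (rule assoc_mult_mat[OF Esc[OF i] Ac Pc])
      also have "\<dots> = Es i * P * Y" using AP by (simp add: assoc_mult_mat[OF Esc[OF i] Pc Yc])
      also have "\<dots> = P * (D i * Y)" using EsP[OF i] by (simp add: assoc_mult_mat[OF Pc Dc Yc])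
      finally show ?thesis .
    qed
    have "Es i * A = Es i * A * (P * Q)" using PQ Esc[OF i] Ac by simp
    also have "\<dots> = P * (D i * Y) * Q" using EAP
      by (simp add: assoc_mult_mat[OF mult_carrier_mat[OF Esc[OF i] Ac] Pc Qc, symmetric])
    also have "\<dots> = P * (D i * Y * Q)"
      by (rule assoc_mult_mat[OF Pc mult_carrier_mat[OF Dc Yc] Qc])
    finally have eq: "Es i * A = P * (D i * Y * Q)" .
    have "mat_trace (Es i * A) = mat_trace (D i * Y * Q * P)"
      unfolding eq by (rule mat_trace_comm[OF Pc]) (use Dc Yc Qc in \<open>auto intro!: mult_carrier_mat\<close>)
    also have "D i * Y * Q * P = D i * Y"
      using QP by (simp add: assoc_mult_mat[OF mult_carrier_mat[OF Dc Yc] Qc Pc] right_mult_one_mat[OF mult_carrier_mat[OF Dc Yc]])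
    also have "mat_trace (D i * Y) = (\<Sum>r<n. (if r = i then 1 else 0) * Y $$ (r,r))"
      unfolding D_def using Yc by (simp add: mult_dg_left mat_trace_def)
    also have "\<dots> = Y $$ (i,i)"
      by (rule trans[OF sum_single[where a=i]]) (use i nd in auto)
    finally show "Y $$ (i,i) = 0" using bip i unfolding bipartite_def by simp
  qed
  define Ad where "Ad = dual_mat d ths Es"
  have Ad_eq: "Ad = P * dg n ths * Q"
  proof (rule eq_matI)
    fix r c assume r: "r < dim_row (P * dg n ths * Q)" and c: "c < dim_col (P * dg n ths * Q)"
    hence r: "r < n" and c: "c < n" using Pc Qc by auto
    have "Ad $$ (r,c) = (\<Sum>i\<le>d. ths i * Es i $$ (r,c))"
      unfolding Ad_def dual_mat_def using r c n_def by simp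
    also have "\<dots> = (\<Sum>i\<le>d. P $$ (r,i) * ths i * Q $$ (i,c))"
      using Es_entry r c by (intro sum.cong) auto
    also have "\<dots> = (P * dg n ths * Q) $$ (r,c)"
      using triple_dg_entry[OF Pc Qc r c, of ths] by (simp add: n_def atLeast0LessThan lessThan_Suc_atMost)
    finally show "Ad $$ (r,c) = (P * dg n ths * Q) $$ (r,c)" .
  qed (use Pc Qc in \<open>auto simp: Ad_def dual_mat_def n_def\<close>)
  have Adc: "Ad \<in> carrier_mat n n" unfolding Ad_eq using Pc Qc by (auto intro!: mult_carrier_mat)
  have AdP: "Ad * P = P * dg n ths"
    unfolding Ad_eq using QP
    by (simp add: assoc_mult_mat[OF mult_carrier_mat[OF Pc dg_carrier] Qc Pc] right_mult_one_mat[OF mult_carrier_mat[OF Pc dg_carrier]])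
  have "\<forall>j. \<exists>u. j \<le> d \<longrightarrow> (u \<in> carrier_vec n \<and> u \<noteq> 0\<^sub>v n \<and> A *\<^sub>v u = th j \<cdot>\<^sub>v u)"
    using mf Ac unfolding multiplicity_free_def eigenvalue_def eigenvector_def by auto
  from choice[OF this] obtain w where w: "\<And>j. j \<le> d \<Longrightarrow> w j \<in> carrier_vec n \<and> w j \<noteq> 0\<^sub>v n \<and> A *\<^sub>v w j = th j \<cdot>\<^sub>v w j"
    by blast
  have thinj: "inj_on th {0..d}" using mf unfolding multiplicity_free_def by simp
  define W where "W = mat_of_cols n (map w [0..<n])"
  have Wc: "W \<in> carrier_mat n n" unfolding carrier_mat_def W_def by simp
  have colW: "\<And>j. j < n \<Longrightarrow> col W j = w j" using w nd by (simp add: W_def)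
  have detW: "det W \<noteq> 0"
  proof
    assume "det W = 0"
    then obtain x where x: "x \<in> carrier_vec n" "x \<noteq> 0\<^sub>v n" "W *\<^sub>v x = 0\<^sub>v n"
      using det_0_iff_vec_prod_zero[OF Wc] by blast
    have "\<forall>r<n. (\<Sum>j\<in>{0..d}. x $ j * w j $ r) = 0"
    proof (intro allI impI)
      fix r assume r: "r < n"
      have "0 = (W *\<^sub>v x) $ r" using x r by simp
      also have "\<dots> = (\<Sum>j\<in>{0..<n}. W $$ (r,j) * x $ j)" using Wc r x(1) by (simp add: scalar_prod_def)
      also have "\<dots> = (\<Sum>j\<in>{0..d}. x $ j * w j $ r)"
      proof (rule sum.cong)
        show "{0..<n} = {0..d}" unfolding n_def by auto
      next
        fix j assume "j \<in> {0..d}"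
        hence j: "j < n" using nd by auto
        show "W $$ (r,j) * x $ j = x $ j * w j $ r" unfolding W_def using j r
          by (simp add: mat_of_cols_index)
      qed
      finally show "(\<Sum>j\<in>{0..d}. x $ j * w j $ r) = 0" by simp
    qed
    moreover have ev': "\<And>j. j \<in> {0..d} \<Longrightarrow> w j \<in> carrier_vec n \<and> w j \<noteq> 0\<^sub>v n \<and> A *\<^sub>v w j = th j \<cdot>\<^sub>v w j"
      using w by simp
    ultimately have "\<forall>j\<in>{0..d}. x $ j = 0"
      using eig_indep[OF Ac finite_atLeastAtMost ev' thinj] by blast
    hence "x = 0\<^sub>v n" using x(1) nd by (intro eq_vecI) auto
    thus False using x(2) by simp
  qed
  obtain Wi where Wic: "Wi \<in> carrier_mat n n" and WWi: "W * Wi = 1\<^sub>m n" and WiW: "Wi * W = 1\<^sub>m n"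
    using det_non_zero_imp_unit[OF Wc detW, of undefined] unfolding Units_def ring_mat_def by auto
  define E0 where "E0 = E 0"
  have E0c: "E0 \<in> carrier_mat n n" using E unfolding E0_def primitive_idempotent_def n_def by auto
  have Ejw: "\<And>j. j \<le> d \<Longrightarrow> E j *\<^sub>v w j = w j"
    using E w unfolding primitive_idempotent_def n_def by blast
  have E0w: "\<And>j. j \<le> d \<Longrightarrow> E0 *\<^sub>v w j = (if j = 0 then w j else 0\<^sub>v n)"
  proof -
    fix j assume j: "j \<le> d"
    show "E0 *\<^sub>v w j = (if j = 0 then w j else 0\<^sub>v n)"
    proof (cases "j = 0")
      case True thus ?thesis using Ejw[OF j] E0_def by simp
    next
      case False thus ?thesis using E j w[OF j] unfolding primitive_idempotent_def E0_def n_def by auto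
    qed
  qed
  have E0A: "E0 * A = th 0 \<cdot>\<^sub>m E0"
  proof (rule eq_by_basis[OF Wc Wic WWi])
    fix j assume j: "j < n"
    have jd: "j \<le> d" using j nd by simp
    have "E0 * A *\<^sub>v col W j = E0 *\<^sub>v (th j \<cdot>\<^sub>v w j)" using colW[OF j] w[OF jd] E0c Ac by simp
    also have "\<dots> = th j \<cdot>\<^sub>v (E0 *\<^sub>v w j)" using E0c w[OF jd] by (simp add: mult_mat_vec)
    also have "\<dots> = th 0 \<cdot>\<^sub>v (E0 *\<^sub>v w j)" using E0w[OF jd] by (cases "j = 0") auto
    also have "\<dots> = (th 0 \<cdot>\<^sub>m E0) *\<^sub>v col W j"
      using colW[OF j] smult_mat_mult_vec[OF E0c, of "w j" "th 0"] w[OF jd] by simp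
    finally show "E0 * A *\<^sub>v col W j = (th 0 \<cdot>\<^sub>m E0) *\<^sub>v col W j" .
  qed (use E0c Ac in auto)
  have E0u: "\<And>u. u \<in> carrier_vec n \<Longrightarrow> E0 *\<^sub>v u = (Wi *\<^sub>v u) $ 0 \<cdot>\<^sub>v w 0"
  proof -
    fix u :: "'a vec" assume u: "u \<in> carrier_vec n"
    define x where "x = Wi *\<^sub>v u"
    have xc: "x \<in> carrier_vec n" using Wic u unfolding x_def by (auto intro!: mult_mat_vec_carrier)
    have "u = W *\<^sub>v x" using WWi u unfolding x_def assoc_mult_mat_vec[OF Wc Wic u, symmetric] by simp
    hence "E0 *\<^sub>v u = (E0 * W) *\<^sub>v x" using assoc_mult_mat_vec[OF E0c Wc xc] by simp
    also have "E0 * W = W * dg n (\<lambda>k. if k = 0 then 1 else 0)"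
    proof (rule mult_eq_dg[OF E0c Wc])
      fix j assume j: "j < n"
      show "E0 *\<^sub>v col W j = (if j = 0 then 1 else 0) \<cdot>\<^sub>v col W j"
      proof -
        have jd: "j \<le> d" using j nd by simp
        have dw: "dim_vec (w j) = n" using w[OF jd] by auto
        show ?thesis using colW[OF j] E0w[OF jd] dw by (cases "j = 0") auto
      qed
    qed
    also have "(W * dg n (\<lambda>k. if k = 0 then 1 else 0)) *\<^sub>v x = x $ 0 \<cdot>\<^sub>v w 0"
    proof (rule eq_vecI)
      fix r assume "r < dim_vec (x $ 0 \<cdot>\<^sub>v w 0)"
      hence r: "r < n" using w[of 0] by auto
      have "(W * dg n (\<lambda>k. if k = 0 then 1 else 0) *\<^sub>v x) $ r
          = (\<Sum>k\<in>{0..<n}. (W $$ (r,k) * (if k = 0 then 1 else 0)) * x $ k)"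
        using Wc r xc by (simp add: mult_dg_right scalar_prod_def)
      also have "\<dots> = W $$ (r,0) * x $ 0"
        by (rule trans[OF sum_single[where a=0]]) (use r in auto)
      also have "\<dots> = (x $ 0 \<cdot>\<^sub>v w 0) $ r" using colW[of 0] r w[of 0] Wc
        by (metis (no_types, lifting) carrier_matD(1) carrier_vecD index_col index_smult_vec(1) mult.commute n_def zero_less_Suc Suc_eq_plus1 le0 carrier_matD(2))
      finally show "(W * dg n (\<lambda>k. if k = 0 then 1 else 0) *\<^sub>v x) $ r = (x $ 0 \<cdot>\<^sub>v w 0) $ r" .
    qed (use Wc w[of 0] in auto)
    finally show "E0 *\<^sub>v u = (Wi *\<^sub>v u) $ 0 \<cdot>\<^sub>v w 0" unfolding x_def .
  qed
  define \<mu> where "\<mu> = (Wi *\<^sub>v (Ad *\<^sub>v w 0)) $ 0"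
  define c where "c = (th 0 - th 1) * \<mu>"
  have E0Adw0: "E0 *\<^sub>v (Ad *\<^sub>v w 0) = \<mu> \<cdot>\<^sub>v w 0"
    unfolding \<mu>_def by (rule E0u) (use Adc w[of 0] in auto)
  have E0AdEj: "\<And>j. j \<le> d \<Longrightarrow> j \<noteq> 0 \<Longrightarrow> j \<noteq> 1 \<Longrightarrow> E0 *\<^sub>v (Ad *\<^sub>v w j) = 0\<^sub>v n"
  proof -
    fix j assume j: "j \<le> d" "j \<noteq> 0" "j \<noteq> 1"
    have nadj: "\<not> Delta_adj d E Ad 0 j" using adj0 j Ad_def by auto
    have "E 0 \<noteq> E j"
    proof
      assume "E 0 = E j"
      hence "E0 *\<^sub>v w j = w j" using Ejw[OF j(1)] E0_def by simp
      thus False using E0w[OF j(1)] j w[OF j(1)] by simp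
    qed
    hence z: "E0 * Ad * E j = 0\<^sub>m n n" using nadj unfolding Delta_adj_def E0_def n_def by simp
    have Ejc: "E j \<in> carrier_mat n n" using E j unfolding primitive_idempotent_def n_def by auto
    have "E0 *\<^sub>v (Ad *\<^sub>v w j) = E0 *\<^sub>v (Ad *\<^sub>v (E j *\<^sub>v w j))" using Ejw[OF j(1)] by simp
    also have "\<dots> = (E0 * Ad * E j) *\<^sub>v w j"
      using assoc_mult_mat_vec[OF mult_carrier_mat[OF E0c Adc] Ejc, of "w j"]
        assoc_mult_mat_vec[OF E0c Adc, of "E j *\<^sub>v w j"] w[OF j(1)] Ejc
      by (simp add: mult_mat_vec_carrier)
    also have "\<dots> = 0\<^sub>v n" using z w[OF j(1)] by simp
    finally show "E0 *\<^sub>v (Ad *\<^sub>v w j) = 0\<^sub>v n" .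
  qed
  have E0AdA: "E0 * Ad * A = th 1 \<cdot>\<^sub>m (E0 * Ad) + c \<cdot>\<^sub>m E0"
  proof (rule eq_by_basis[OF Wc Wic WWi])
    fix j assume j: "j < n"
    have jd: "j \<le> d" using j nd by simp
    have wj: "w j \<in> carrier_vec n" using w[OF jd] by simp
    have zc: "E0 *\<^sub>v (Ad *\<^sub>v w j) \<in> carrier_vec n" using E0c Adc wj by (auto intro!: mult_mat_vec_carrier)
    have EAc: "E0 * Ad \<in> carrier_mat n n" by (rule mult_carrier_mat[OF E0c Adc])
    have "E0 * Ad * A *\<^sub>v col W j = (E0 * Ad) *\<^sub>v (A *\<^sub>v w j)"
      unfolding colW[OF j] by (rule assoc_mult_mat_vec[OF EAc Ac wj])
    also have "\<dots> = E0 *\<^sub>v (Ad *\<^sub>v (th j \<cdot>\<^sub>v w j))"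
      using w[OF jd] assoc_mult_mat_vec[OF E0c Adc, of "th j \<cdot>\<^sub>v w j"] wj by simp
    also have "\<dots> = th j \<cdot>\<^sub>v (E0 *\<^sub>v (Ad *\<^sub>v w j))" using E0c Adc wj by (simp add: mult_mat_vec)
    also have "\<dots> = th 1 \<cdot>\<^sub>v (E0 *\<^sub>v (Ad *\<^sub>v w j)) + c \<cdot>\<^sub>v (E0 *\<^sub>v w j)"
    proof (cases "j = 0")
      case True
      show ?thesis unfolding True E0Adw0 using E0w[of 0] w[of 0]
        by (intro eq_vecI) (auto simp: c_def algebra_simps)
    next
      case False
      show ?thesis
      proof (cases "j = 1")
        case True
        thus ?thesis using E0w[OF jd] zc False by (intro eq_vecI) auto
      next
        case False2: False
        thus ?thesis using E0w[OF jd] E0AdEj[OF jd False False2] False by (intro eq_vecI) auto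
      qed
    qed
    also have "\<dots> = th 1 \<cdot>\<^sub>v ((E0 * Ad) *\<^sub>v w j) + c \<cdot>\<^sub>v (E0 *\<^sub>v w j)"
      using assoc_mult_mat_vec[OF E0c Adc wj] by simp
    also have "\<dots> = (th 1 \<cdot>\<^sub>m (E0 * Ad)) *\<^sub>v w j + (c \<cdot>\<^sub>m E0) *\<^sub>v w j"
      using smult_mat_mult_vec[OF EAc wj] smult_mat_mult_vec[OF E0c wj] by simp
    also have "\<dots> = (th 1 \<cdot>\<^sub>m (E0 * Ad) + c \<cdot>\<^sub>m E0) *\<^sub>v col W j"
      unfolding colW[OF j]
      by (rule add_mult_distrib_mat_vec[symmetric, OF smult_carrier_mat[OF EAc] smult_carrier_mat[OF E0c] wj])
    finally show "E0 * Ad * A *\<^sub>v col W j = (th 1 \<cdot>\<^sub>m (E0 * Ad) + c \<cdot>\<^sub>m E0) *\<^sub>v col W j" .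
  qed (use E0c Ac Adc in \<open>auto intro!: mult_carrier_mat add_carrier_mat smult_carrier_mat\<close>)
  define F where "F = E0 * P"
  have Fc: "F \<in> carrier_mat n n" using E0c Pc unfolding F_def by (auto intro!: mult_carrier_mat)
  have FY: "F * Y = th 0 \<cdot>\<^sub>m F"
  proof -
    have "F * Y = E0 * (A * P)" unfolding F_def AP by (rule assoc_mult_mat[OF E0c Pc Yc])
    also have "\<dots> = (th 0 \<cdot>\<^sub>m E0) * P" using E0A by (simp add: assoc_mult_mat[OF E0c Ac Pc, symmetric])
    also have "\<dots> = th 0 \<cdot>\<^sub>m F" unfolding F_def by (rule mult_smult_assoc_mat[OF E0c Pc])
    finally show ?thesis .
  qed
  have FXY: "F * dg n ths * Y = th 1 \<cdot>\<^sub>m (F * dg n ths) + c \<cdot>\<^sub>m F"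
  proof -
    have "F * dg n ths * Y = E0 * (P * dg n ths) * Y"
      unfolding F_def by (simp add: assoc_mult_mat[OF E0c Pc dg_carrier])
    also have "\<dots> = E0 * (Ad * P) * Y" using AdP by simp
    also have "\<dots> = E0 * Ad * (P * Y)"
      by (simp add: assoc_mult_mat[OF E0c Adc Pc, symmetric] assoc_mult_mat[OF mult_carrier_mat[OF E0c Adc] Pc Yc])
    also have "\<dots> = (E0 * Ad * A) * P" unfolding AP[symmetric]
      by (simp add: assoc_mult_mat[OF mult_carrier_mat[OF E0c Adc] Ac Pc])
    also have "\<dots> = th 1 \<cdot>\<^sub>m (E0 * Ad * P) + c \<cdot>\<^sub>m (E0 * P)"
      unfolding E0AdA using E0c Adc Pc
      by (simp add: add_mult_distrib_mat[of _ n n _ _ n] mult_smult_assoc_mat[of _ n n _ n])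
    also have "E0 * Ad * P = F * dg n ths"
      unfolding F_def using AdP by (simp add: assoc_mult_mat[OF E0c Adc Pc] assoc_mult_mat[OF E0c Pc dg_carrier])
    finally show ?thesis unfolding F_def .
  qed
  have R1: "\<And>r j. r < n \<Longrightarrow> j < n \<Longrightarrow> (\<Sum>i\<in>{0..<n}. F $$ (r,i) * Y $$ (i,j)) = th 0 * F $$ (r,j)"
  proof -
    fix r j assume r: "r < n" and j: "j < n"
    have "(F * Y) $$ (r,j) = (th 0 \<cdot>\<^sub>m F) $$ (r,j)" using FY by simp
    thus "(\<Sum>i\<in>{0..<n}. F $$ (r,i) * Y $$ (i,j)) = th 0 * F $$ (r,j)"
      using Fc Yc r j by (simp add: scalar_prod_def)
  qed
  have R2: "\<And>r j. r < n \<Longrightarrow> j < n \<Longrightarrow> (\<Sum>i\<in>{0..<n}. F $$ (r,i) * ths i * Y $$ (i,j)) = th 1 * (F $$ (r,j) * ths j) + c * F $$ (r,j)"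
  proof -
    fix r j assume r: "r < n" and j: "j < n"
    have "(F * dg n ths * Y) $$ (r,j) = (th 1 \<cdot>\<^sub>m (F * dg n ths) + c \<cdot>\<^sub>m F) $$ (r,j)" using FXY by simp
    thus "(\<Sum>i\<in>{0..<n}. F $$ (r,i) * ths i * Y $$ (i,j)) = th 1 * (F $$ (r,j) * ths j) + c * F $$ (r,j)"
      using Fc Yc r j by (simp add: scalar_prod_def mult_dg_right)
  qed
  have Fnz: "F \<noteq> 0\<^sub>m n n"
  proof
    assume F0: "F = 0\<^sub>m n n"
    have "E0 = E0 * (P * Q)" using PQ E0c by simp
    also have "\<dots> = F * Q" unfolding F_def by (rule assoc_mult_mat[OF E0c Pc Qc, symmetric])
    also have "\<dots> = 0\<^sub>m n n" using F0 Qc by simp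
    finally have "E0 *\<^sub>v w 0 = 0\<^sub>v n" using w[of 0] by simp
    thus False using E0w[of 0] w[of 0] by simp
  qed
  obtain r k where r: "r < n" and k: "k < n" and Frk: "F $$ (r,k) \<noteq> 0"
    using zero_entry_mat[OF Fc Fnz] by blast
  define f where "f i = F $$ (r,i)" for i
  have fwd: "f 0 \<noteq> 0"
  proof
    assume f0: "f 0 = 0"
    have "\<forall>i\<le>m. f i = 0" if "m \<le> d" for m
      using that
    proof (induction m)
      case 0 thus ?case using f0 by simp
    next
      case (Suc m)
      hence IH: "\<forall>i\<le>m. f i = 0" by simp
      have "(\<Sum>i\<in>{0..<n}. F $$ (r,i) * Y $$ (i,m)) = F $$ (r, Suc m) * Y $$ (Suc m, m)"
      proof (rule sum_single)
        fix i assume "i \<in> {0..<n}" "i \<noteq> Suc m"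
        thus "F $$ (r,i) * Y $$ (i,m) = 0" using IH Yoff[of i m] Suc.prems nd unfolding f_def
          by (cases "i \<le> m") auto
      qed (use Suc.prems nd in auto)
      moreover have "(\<Sum>i\<in>{0..<n}. F $$ (r,i) * Y $$ (i,m)) = 0"
        using R1[OF r, of m] Suc.prems nd IH unfolding f_def by auto
      moreover have "Y $$ (Suc m, m) \<noteq> 0" using Yadj[of "Suc m" m] Suc.prems by auto
      ultimately have "f (Suc m) = 0" unfolding f_def by simp
      thus ?case using IH le_Suc_eq by auto
    qed
    hence "f k = 0" using k nd by auto
    thus False using Frk f_def by simp
  qed
  have bwd: "f d \<noteq> 0"
  proof
    assume fd: "f d = 0"
    have "\<forall>i. d - m \<le> i \<and> i \<le> d \<longrightarrow> f i = 0" if "m \<le> d" for m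
      using that
    proof (induction m)
      case 0 thus ?case using fd by auto
    next
      case (Suc m)
      hence IH: "\<forall>i. d - m \<le> i \<and> i \<le> d \<longrightarrow> f i = 0" by simp
      define q where "q = d - m"
      have q: "q \<ge> 1" "q \<le> d" using Suc.prems q_def by auto
      have "(\<Sum>i\<in>{0..<n}. F $$ (r,i) * Y $$ (i,q)) = F $$ (r, q - 1) * Y $$ (q - 1, q)"
      proof (rule sum_single)
        fix i assume "i \<in> {0..<n}" "i \<noteq> q - 1"
        thus "F $$ (r,i) * Y $$ (i,q) = 0" using IH Yoff[of i q] q nd unfolding f_def q_def[symmetric]
          by (cases "q \<le> i") auto
      qed (use q nd in auto)
      moreover have "(\<Sum>i\<in>{0..<n}. F $$ (r,i) * Y $$ (i,q)) = 0"
        using R1[OF r, of q] q nd IH unfolding f_def q_def by auto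
      moreover have "Y $$ (q - 1, q) \<noteq> 0" using Yadj[of "q - 1" q] q by auto
      ultimately have "f (q - 1) = 0" unfolding f_def by simp
      thus ?case using IH q_def Suc.prems
        by (metis Suc_diff_Suc diff_Suc_1 le_antisym not_less_eq_eq Suc_le_lessD)
    qed
    hence "f k = 0" using k nd by (metis diff_self_eq_0 le0 le_refl)
    thus False using Frk f_def by simp
  qed
  have d1: "1 \<le> d" "d - 1 < d" "1 < n" "d < n" "0 < n" "d - 1 < n" using d3 nd by auto
  have col0: "\<And>g. (\<Sum>i\<in>{0..<n}. g i * Y $$ (i,0)) = g 1 * Y $$ (1,0)"
  proof (rule sum_single)
    fix g and i :: nat assume i: "i \<in> {0..<n}" "i \<noteq> 1"
    show "g i * Y $$ (i,0) = 0"
    proof (cases "i = 0")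
      case True thus ?thesis using Ydiag[of 0] by simp
    next
      case False
      hence "i > 0 + 1" using i by simp
      thus ?thesis using Yoff[of i 0] i nd by simp
    qed
  qed (use d1 in auto)
  have cold: "\<And>g. (\<Sum>i\<in>{0..<n}. g i * Y $$ (i,d)) = g (d - 1) * Y $$ (d - 1,d)"
  proof (rule sum_single)
    fix g and i :: nat assume i: "i \<in> {0..<n}" "i \<noteq> d - 1"
    show "g i * Y $$ (i,d) = 0"
    proof (cases "i = d")
      case True thus ?thesis using Ydiag[of d] by simp
    next
      case False
      hence "i \<le> d" "d > i + 1" using i nd d1 by auto
      thus ?thesis using Yoff[of i d] by simp
    qed
  qed (use d1 in auto)
  have e1: "F $$ (r,1) * Y $$ (1,0) = th 0 * F $$ (r,0)"
    using R1[OF r d1(5)] col0[of "\<lambda>i. F $$ (r,i)"] by simp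
  have e2: "F $$ (r,1) * ths 1 * Y $$ (1,0) = th 1 * (F $$ (r,0) * ths 0) + c * F $$ (r,0)"
    using R2[OF r d1(5)] col0[of "\<lambda>i. F $$ (r,i) * ths i"] by simp
  have "F $$ (r,0) * (th 0 * ths 1) = ths 1 * (th 0 * F $$ (r,0))" by (simp add: algebra_simps)
  also have "\<dots> = ths 1 * (F $$ (r,1) * Y $$ (1,0))" using e1 by simp
  also have "\<dots> = F $$ (r,1) * ths 1 * Y $$ (1,0)" by (simp add: algebra_simps)
  also have "\<dots> = F $$ (r,0) * (th 1 * ths 0 + c)" using e2 by (simp add: algebra_simps)
  finally have eq0: "th 0 * ths 1 = th 1 * ths 0 + c" using fwd unfolding f_def by simp
  have e3: "F $$ (r,d-1) * Y $$ (d-1,d) = th 0 * F $$ (r,d)"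
    using R1[OF r d1(4)] cold[of "\<lambda>i. F $$ (r,i)"] by simp
  have e4: "F $$ (r,d-1) * ths (d-1) * Y $$ (d-1,d) = th 1 * (F $$ (r,d) * ths d) + c * F $$ (r,d)"
    using R2[OF r d1(4)] cold[of "\<lambda>i. F $$ (r,i) * ths i"] by simp
  have "F $$ (r,d) * (th 0 * ths (d-1)) = ths (d-1) * (th 0 * F $$ (r,d))" by (simp add: algebra_simps)
  also have "\<dots> = ths (d-1) * (F $$ (r,d-1) * Y $$ (d-1,d))" using e3 by simp
  also have "\<dots> = F $$ (r,d-1) * ths (d-1) * Y $$ (d-1,d)" by (simp add: algebra_simps)
  also have "\<dots> = F $$ (r,d) * (th 1 * ths d + c)" using e4 by (simp add: algebra_simps)
  finally have eqd: "th 0 * ths (d-1) = th 1 * ths d + c" using bwd unfolding f_def by simp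
  have "(\<Sum>j\<le>d. Y $$ (0,j)) = Y $$ (0,1)"
  proof (rule sum_single)
    fix j :: nat assume j: "j \<in> {..d}" "j \<noteq> 1"
    show "Y $$ (0,j) = 0"
    proof (cases "j = 0")
      case True thus ?thesis using Ydiag[of 0] by simp
    next
      case False
      hence "j > 0 + 1" using j by simp
      thus ?thesis using Yoff[of 0 j] j by simp
    qed
  qed (use d1 in auto)
  hence "Y $$ (0,1) = th 0" using rows by simp
  moreover have "Y $$ (0,1) \<noteq> 0" using Yadj[of 0 1] d1 by simp
  ultimately have th0: "th 0 \<noteq> 0" by simp
  have "th 0 * (ths (d-1) - ths 1) = th 0 * ths (d-1) - th 0 * ths 1" by (simp add: right_diff_distrib)
  also have "\<dots> = (th 1 * ths d + c) - (th 1 * ths 0 + c)" using eq0 eqd by simp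
  also have "\<dots> = th 1 * (ths d - ths 0)" by (simp add: right_diff_distrib)
  finally have main: "th 0 * (ths (d-1) - ths 1) = th 1 * (ths d - ths 0)" .
  have th1: "th 1 \<noteq> 0"
  proof
    assume "th 1 = 0"
    hence "th 0 * ths 1 = th 0 * ths (d-1)" using eq0 eqd by simp
    hence "ths 1 = ths (d-1)" using th0 by simp
    hence "1 = d - 1" using ths d1 by (auto simp: inj_on_def)
    thus False using d3 by simp
  qed
  show ?thesis using main th0 th1 by simp
qed
end
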